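(* Let $F$ be a Boolean formula over $n$ variables and let $1\le m\le n$. If $|\mathrm{Sol}(F)| \le 2^{m-2}$, then $\varphi_{stock}^F(m)$ is true.
   Context: $\mathrm{Sol}(F)\subseteq\{0,1\}^n$ denotes the set of satisfying assignments of $F$. For $n,m,k\ge 1$, $\mathcal{H}(n,m,k)$ denotes a fixed explicit $k$-wise independent family of hash functions $\{0,1\}^n\to\{0,1\}^m$: for $h$ drawn uniformly from $\mathcal{H}(n,m,k)$, all distinct $y_1,\dots,y_k\in\{0,1\}^n$ and all $\alpha_1,\dots,\alpha_k\in\{0,1\}^m$, $\Pr[h(y_1)=\alpha_1\wedge\cdots\wedge h(y_k)=\alpha_k]=2^{-mk}$. The statement $\varphi_{stock}^F(m)$ means: there exist $h_1,\dots,h_m\in\mathcal{H}(n,m,2)$ such that for every $z_1\in\mathrm{Sol}(F)$ there is an index $i\in\{1,\dots,m\}$ such that no $z_2\in\mathrm{Sol}(F)$ with $z_2\neq z_1$ satisfies $h_i(z_2)=h_i(z_1)$. *)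

theory Defs
  imports Complex_Main
begin

text \<open>Boolean formulas over propositional variables indexed by natural numbers.
  An assignment in {0,1}^n is a bool list of length n (variable i is position i).\<close>

datatype form = FVar nat | FTrue | FFalse | FNot form | FAnd form form | FOr form form

fun fvars :: "form \<Rightarrow> nat set" where
  "fvars (FVar i) = {i}"
| "fvars FTrue = {}"
| "fvars FFalse = {}"
| "fvars (FNot f) = fvars f"
| "fvars (FAnd f g) = fvars f \<union> fvars g"
| "fvars (FOr f g) = fvars f \<union> fvars g"

fun feval :: "bool list \<Rightarrow> form \<Rightarrow> bool" where
  "feval x (FVar i) = x ! i"
| "feval x FTrue = True"
| "feval x FFalse = False"
| "feval x (FNot f) = (\<not> feval x f)"
| "feval x (FAnd f g) = (feval x f \<and> feval x g)"
| "feval x (FOr f g) = (feval x f \<or> feval x g)"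

definition formula_over :: "nat \<Rightarrow> form \<Rightarrow> bool" where
  "formula_over n F \<longleftrightarrow> fvars F \<subseteq> {..<n}"

definition Sol :: "nat \<Rightarrow> form \<Rightarrow> bool list set" where
  "Sol n F = {x. length x = n \<and> feval x F}"

definition kwise_indep_family ::
  "(bool list \<Rightarrow> bool list) set \<Rightarrow> nat \<Rightarrow> nat \<Rightarrow> nat \<Rightarrow> bool" where
  "kwise_indep_family H n m k \<longleftrightarrow>
     finite H \<and> H \<noteq> {} \<and>
     (\<forall>h\<in>H. \<forall>y. length y = n \<longrightarrow> length (h y) = m) \<and>
     (\<forall>ys as. length ys = k \<and> distinct ys \<and> (\<forall>y\<in>set ys. length y = n) \<and>
        length as = k \<and> (\<forall>a\<in>set as. length a = m) \<longrightarrow>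
        real (card {h\<in>H. \<forall>i<k. h (ys ! i) = as ! i}) / real (card H)
          = 2 powr (- real (m * k)))"

definition phi_stock ::
  "(bool list \<Rightarrow> bool list) set \<Rightarrow> nat \<Rightarrow> form \<Rightarrow> nat \<Rightarrow> bool" where
  "phi_stock H n F m \<longleftrightarrow>
     (\<exists>hs. length hs = m \<and> set hs \<subseteq> H \<and>
        (\<forall>z1\<in>Sol n F. \<exists>i<m. \<not> (\<exists>z2\<in>Sol n F. z2 \<noteq> z1 \<and> (hs ! i) z2 = (hs ! i) z1)))"

end

theory Submission
  imports Defs
begin

lemma bool_lists_card: "card {a::bool list. length a = m} = 2 ^ m"
  and bool_lists_finite: "finite {a::bool list. length a = m}"
  using card_lists_length_eq[of "UNIV::bool set" m] finite_lists_length_eq[of "UNIV::bool set" m]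
  by auto

lemma collision:
  assumes K: "kwise_indep_family H n m 2"
    and y: "length y1 = n" "length y2 = n" "y1 \<noteq> y2"
  shows "card {h\<in>H. h y1 = h y2} * 2 ^ m = card H"
proof -
  have fin: "finite H" and ne: "H \<noteq> {}" and len: "\<And>h y. h \<in> H \<Longrightarrow> length y = n \<Longrightarrow> length (h y) = m"
    using K unfolding kwise_indep_family_def by auto
  have pt: "card {h\<in>H. h y1 = a \<and> h y2 = a} * 2 ^ (2*m) = card H" if a: "length a = m" for a
  proof -
    have "real (card {h\<in>H. \<forall>i<2. h ([y1,y2] ! i) = [a,a] ! i}) / real (card H)
          = 2 powr (- real (m * 2))"
    proof -
      have "\<forall>ys as. length ys = 2 \<and> distinct ys \<and> (\<forall>y\<in>set ys. length y = n) \<and>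
        length as = 2 \<and> (\<forall>a\<in>set as. length a = m) \<longrightarrow>
        real (card {h\<in>H. \<forall>i<2. h (ys ! i) = as ! i}) / real (card H)
          = 2 powr (- real (m * 2))" using K unfolding kwise_indep_family_def by blast
      from spec[OF spec[OF this, of "[y1,y2]"], of "[a,a]"] show ?thesis using y a by simp
    qed
    moreover have "{h\<in>H. \<forall>i<2. h ([y1,y2] ! i) = [a,a] ! i} = {h\<in>H. h y1 = a \<and> h y2 = a}"
      by (auto simp: less_2_cases_iff)
    ultimately have e: "real (card {h\<in>H. h y1 = a \<and> h y2 = a}) / real (card H) = 2 powr (- real (m * 2))"
      by simp
    have cH: "real (card H) > 0" using fin ne by (simp add: card_gt_0_iff)
    have pw: "2 powr real (m*2) = (2::real) ^ (m*2)" by (rule powr_realpow) simp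
    have "2 powr (- real (m * 2)) = 1 / 2 ^ (2*m)"
      by (simp only: powr_minus pw) (simp add: divide_inverse mult.commute)
    with e cH have "real (card {h\<in>H. h y1 = a \<and> h y2 = a}) * 2 ^ (2*m) = real (card H)"
      by (simp add: field_simps)
    then have "real (card {h\<in>H. h y1 = a \<and> h y2 = a} * 2 ^ (2*m)) = real (card H)" by simp
    then show ?thesis by (simp only: of_nat_eq_iff)
  qed
  define A where "A = {a::bool list. length a = m}"
  have finA: "finite A" and cA: "card A = 2^m" unfolding A_def by (rule bool_lists_finite, rule bool_lists_card)
  have "{h\<in>H. h y1 = h y2} = (\<Union>a\<in>A. {h\<in>H. h y1 = a \<and> h y2 = a})"
  proof (rule set_eqI, rule iffI)
    fix h assume "h \<in> {h\<in>H. h y1 = h y2}"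
    then have h: "h \<in> H" "h y1 = h y2" by simp_all
    then have "h y1 \<in> A" using len[OF h(1) y(1)] unfolding A_def by simp
    with h show "h \<in> (\<Union>a\<in>A. {h\<in>H. h y1 = a \<and> h y2 = a})" by (intro UN_I[of "h y1"]) simp_all
  next
    fix h assume "h \<in> (\<Union>a\<in>A. {h\<in>H. h y1 = a \<and> h y2 = a})"
    then show "h \<in> {h\<in>H. h y1 = h y2}" by (elim UN_E) simp
  qed
  then have "card {h\<in>H. h y1 = h y2} = (\<Sum>a\<in>A. card {h\<in>H. h y1 = a \<and> h y2 = a})"
    using fin finA by (simp only:) (rule card_UN_disjoint, auto)
  then have "card {h\<in>H. h y1 = h y2} * 2 ^ (2*m) = (\<Sum>a\<in>A. card H)"
    by (simp add: sum_distrib_right pt A_def)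
  also have "\<dots> = 2^m * card H" using cA by simp
  finally have e1: "card {h\<in>H. h y1 = h y2} * 2 ^ (2*m) = 2^m * card H" .
  have "card {h\<in>H. h y1 = h y2} * 2 ^ m * 2^m = card H * 2^m"
  proof -
    have p2: "(2::nat)^(2*m) = 2^m*2^m" by (simp add: mult_2 power_add)
    have "card {h\<in>H. h y1 = h y2} * (2 ^ m * 2^m) = card H * 2^m"
      using e1 unfolding p2 by (simp only: mult.commute)
    then show ?thesis by (simp only: mult.assoc)
  qed
  then show ?thesis by simp
qed


lemma step:
  fixes S :: "bool list set" and H :: "(bool list \<Rightarrow> bool list) set"
  assumes fin: "finite H" and ne: "H \<noteq> {}" and finS: "finite S"
    and coll: "\<And>y1 y2. y1 \<in> S \<Longrightarrow> y2 \<in> S \<Longrightarrow> y1 \<noteq> y2 \<Longrightarrow> card {h\<in>H. h y1 = h y2} * 2 ^ m = card H"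
    and small: "card S * 4 \<le> 2 ^ m"
    and RS: "R \<subseteq> S"
  shows "\<exists>h\<in>H. card {z\<in>R. \<exists>z2\<in>S. z2 \<noteq> z \<and> h z2 = h z} * 4 \<le> card R"
proof (rule ccontr)
  assume nx: "\<not> ?thesis"
  define c where "c (h::bool list \<Rightarrow> bool list) = card {z\<in>R. \<exists>z2\<in>S. z2 \<noteq> z \<and> h z2 = h z}" for h
  have finR: "finite R" using finS RS finite_subset by blast
  have c_le: "c h \<le> (\<Sum>z\<in>R. \<Sum>z2\<in>S-{z}. of_bool (h z2 = h z))" for h
  proof -
    have "c h = (\<Sum>z\<in>R. of_bool (\<exists>z2\<in>S. z2 \<noteq> z \<and> h z2 = h z))"
      unfolding c_def using finR by (simp add: sum.If_cases Int_def)
    also have "\<dots> \<le> (\<Sum>z\<in>R. \<Sum>z2\<in>S-{z}. of_bool (h z2 = h z))"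
    proof (rule sum_mono)
      fix z assume "z \<in> R"
      show "of_bool (\<exists>z2\<in>S. z2 \<noteq> z \<and> h z2 = h z) \<le> (\<Sum>z2\<in>S-{z}. of_bool (h z2 = h z)::nat)"
      proof (cases "\<exists>z2\<in>S. z2 \<noteq> z \<and> h z2 = h z")
        case True
        then obtain z2 where "z2 \<in> S - {z}" "h z2 = h z" by blast
        then have "(of_bool (h z2 = h z)::nat) \<le> (\<Sum>z2\<in>S-{z}. of_bool (h z2 = h z))"
          using finS by (intro member_le_sum) auto
        then show ?thesis using True \<open>h z2 = h z\<close> by simp
      qed auto
    qed
    finally show ?thesis .
  qed
  have "(\<Sum>h\<in>H. c h) \<le> (\<Sum>h\<in>H. \<Sum>z\<in>R. \<Sum>z2\<in>S-{z}. of_bool (h z2 = h z))"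
    by (rule sum_mono) (rule c_le)
  also have "\<dots> = (\<Sum>z\<in>R. \<Sum>z2\<in>S-{z}. \<Sum>h\<in>H. of_bool (h z2 = h z))"
    by (subst sum.swap) (rule sum.cong[OF refl], rule sum.swap)
  also have "\<dots> = (\<Sum>z\<in>R. \<Sum>z2\<in>S-{z}. card {h\<in>H. h z2 = h z})"
    using fin by (simp add: sum.If_cases Int_def)
  finally have A0: "(\<Sum>h\<in>H. c h) \<le> (\<Sum>z\<in>R. \<Sum>z2\<in>S-{z}. card {h\<in>H. h z2 = h z})" .
  have A: "(\<Sum>h\<in>H. c h) * 2^m \<le> (\<Sum>z\<in>R. \<Sum>z2\<in>S-{z}. card {h\<in>H. h z2 = h z} * 2^m)"
    unfolding sum_distrib_right[symmetric] using A0 by (rule mult_right_mono) simp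
  also have "\<dots> = (\<Sum>z\<in>R. \<Sum>z2\<in>S-{z}. card H)"
    using RS by (intro sum.cong refl) (auto intro: coll)
  also have "\<dots> = card R * ((card S - 1) * card H)"
    using RS finS by (simp add: card_Diff_singleton subset_iff)
  finally have B: "(\<Sum>h\<in>H. c h) * 4 * 2^m \<le> card R * card H * (4 * (card S - 1))"
    by (simp add: algebra_simps)
  also have "\<dots> \<le> card R * card H * 2^m"
    using small by (intro mult_left_mono) auto
  finally have C: "(\<Sum>h\<in>H. c h) * 4 \<le> card R * card H" by simp
  have "(\<Sum>h\<in>H. card R) < (\<Sum>h\<in>H. c h * 4)"
    using nx fin ne by (intro sum_strict_mono) (auto simp: c_def not_le)
  also have "\<dots> = (\<Sum>h\<in>H. c h) * 4" by (rule sum_distrib_right[symmetric])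
  finally have "card H * card R < (\<Sum>h\<in>H. c h) * 4" by simp
  moreover have "card R * card H = card H * card R" by (rule mult.commute)
  ultimately show False using C by linarith
qed


theorem lemma3p2:
  fixes H :: "(bool list \<Rightarrow> bool list) set" and n m :: nat and F :: form
  assumes "kwise_indep_family H n m 2"
    and "formula_over n F"
    and "1 \<le> m" and "m \<le> n"
    and "real (card (Sol n F)) \<le> 2 powr (real m - 2)"
  shows "phi_stock H n F m"
proof -
  define S where "S = Sol n F"
  have K: "kwise_indep_family H n m 2" by fact
  have fin: "finite H" and ne: "H \<noteq> {}"
    using K unfolding kwise_indep_family_def by simp_all
  have lenS: "length z = n" if "z \<in> S" for z using that unfolding S_def Sol_def by simp
  have finS: "finite S"
  proof (rule finite_subset)
    show "S \<subseteq> {xs. set xs \<subseteq> (UNIV::bool set) \<and> length xs = n}" using lenS by blast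
    show "finite {xs. set xs \<subseteq> (UNIV::bool set) \<and> length xs = n}"
      by (rule finite_lists_length_eq) simp
  qed
  have coll: "card {h\<in>H. h y1 = h y2} * 2 ^ m = card H"
    if "y1 \<in> S" "y2 \<in> S" "y1 \<noteq> y2" for y1 y2
    using collision[OF K lenS[OF that(1)] lenS[OF that(2)] that(3)] .
  have pm: "2 powr (real m - 2) = (2::real)^m / 4"
  proof -
    have a: "2 powr real m = (2::real)^m" by (rule powr_realpow) simp
    have b: "2 powr (2::real) = 4" by simp
    show ?thesis by (simp only: powr_diff a b)
  qed
  have "real (card S) * 4 \<le> 2^m" using assms(5) unfolding pm S_def by simp
  then have small: "card S * 4 \<le> 2 ^ m"
    by (metis of_nat_le_iff of_nat_mult of_nat_numeral of_nat_power)
  define bad where "bad h z = (\<exists>z2\<in>S. z2 \<noteq> z \<and> h z2 = h z)" for h :: "bool list \<Rightarrow> bool list" and z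
  have ind: "\<exists>hs. length hs = k \<and> set hs \<subseteq> H \<and>
      card {z\<in>S. \<forall>i<k. bad (hs ! i) z} * 2 ^ k \<le> card S" for k
  proof (induction k)
    case 0
    show ?case by (rule exI[of _ "[]"]) (simp add: card_mono[OF finS])
  next
    case (Suc k)
    then obtain hs where hs: "length hs = k" "set hs \<subseteq> H"
      and c: "card {z\<in>S. \<forall>i<k. bad (hs ! i) z} * 2 ^ k \<le> card S" by blast
    define R where "R = {z\<in>S. \<forall>i<k. bad (hs ! i) z}"
    have RS: "R \<subseteq> S" unfolding R_def by blast
    obtain h where h: "h \<in> H" and hc: "card {z\<in>R. \<exists>z2\<in>S. z2 \<noteq> z \<and> h z2 = h z} * 4 \<le> card R"
      using step[OF fin ne finS coll small RS] by blast
    have eq: "{z\<in>S. \<forall>i<Suc k. bad ((hs @ [h]) ! i) z} = {z\<in>R. \<exists>z2\<in>S. z2 \<noteq> z \<and> h z2 = h z}"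
    proof -
      have "(\<forall>i<Suc k. bad ((hs @ [h]) ! i) z) = ((\<forall>i<k. bad (hs ! i) z) \<and> bad h z)" for z
        using hs(1) by (auto simp: less_Suc_eq nth_append)
      then show ?thesis unfolding R_def bad_def by auto
    qed
    have "card {z\<in>S. \<forall>i<Suc k. bad ((hs @ [h]) ! i) z} * 2 ^ Suc k
        \<le> card {z\<in>R. \<exists>z2\<in>S. z2 \<noteq> z \<and> h z2 = h z} * 4 * 2 ^ k"
      unfolding eq by simp
    also have "\<dots> \<le> card R * 2 ^ k" using hc by simp
    also have "\<dots> \<le> card S" using c unfolding R_def .
    finally show ?case using hs h by (intro exI[of _ "hs @ [h]"]) simp
  qed
  obtain hs where hs: "length hs = m" "set hs \<subseteq> H"
    and c: "card {z\<in>S. \<forall>i<m. bad (hs ! i) z} * 2 ^ m \<le> card S" using ind by blast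
  have "(0::nat) < 2 ^ m" by simp
  then have "card S < 2 ^ m" using small by linarith
  with c have "card {z\<in>S. \<forall>i<m. bad (hs ! i) z} = 0" by (cases "card {z\<in>S. \<forall>i<m. bad (hs ! i) z}") auto
  then have "{z\<in>S. \<forall>i<m. bad (hs ! i) z} = {}" using finS by simp
  then show ?thesis unfolding phi_stock_def using hs unfolding S_def[symmetric] bad_def by blast
qed


end
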